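(* Let $K$ be a field and $A$ a subring of $K$. Then the surjective map $\gamma:\mathrm{Zar}(K|A)\to\mathrm{Spec}(A)$, $V\mapsto M_V\cap A$, is continuous and closed when both $\mathrm{Zar}(K|A)$ and $\mathrm{Spec}(A)$ are endowed with their ultrafilter topologies.
   Context: $\mathrm{Zar}(K|A)$ denotes the set of all valuation rings of $K$ containing $A$; $M_V$ denotes the maximal ideal of $V$, and $M_V\cap A$ is the center of $V$ on $A$. A filter on a set $X$ is a nonempty collection of subsets of $X$ not containing $\emptyset$, closed under finite intersections and supersets; an ultrafilter is a maximal filter. Ultrafilter topology on $Z:=\mathrm{Zar}(K|A)$: for $x\in K$ let $B_x:=\{V\in Z\mid x\in V\}$; for $Y\subseteq Z$ nonempty and an ultrafilter $\mathscr U$ on $Y$ let $A_{\mathscr U,Y}:=\{x\in K\mid B_x\cap Y\in\mathscr U\}$ (a valuation domain in $Z$); the closed sets are the subsets $Y$ with $A_{\mathscr U,Y}\in Y$ for every ultrafilter $\mathscr U$ on $Y$. Ultrafilter topology on $X:=\mathrm{Spec}(A)$: for $a\in A$ let $V(a):=\{P\in X\mid a\in P\}$; for $C\subseteq X$ and an ultrafilter $\mathscr U$ on $C$, $P_{\mathscr U}:=\{a\in A\mid V(a)\cap C\in\mathscr U\}$ is a prime ideal of $A$ (an ultrafilter limit point of $C$); the closed sets are the subsets $C$ containing all their ultrafilter limit points. *)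

theory Defs
  imports Main
begin

text \<open>All rings are subrings of a fixed field, represented as subsets of a type 'k of class field.\<close>

definition is_subring :: "'k::field set \<Rightarrow> bool" where
  "is_subring R \<longleftrightarrow> 0 \<in> R \<and> 1 \<in> R \<and>
     (\<forall>x\<in>R. \<forall>y\<in>R. x + y \<in> R \<and> - x \<in> R \<and> x * y \<in> R)"

definition valuation_ring :: "'k::field set \<Rightarrow> bool" where
  "valuation_ring V \<longleftrightarrow> is_subring V \<and> (\<forall>x. x \<noteq> 0 \<longrightarrow> x \<in> V \<or> inverse x \<in> V)"

definition Zar :: "'k::field set \<Rightarrow> 'k set set" where
  "Zar A = {V. valuation_ring V \<and> A \<subseteq> V}"

definition max_ideal :: "'k::field set \<Rightarrow> 'k set" where
  "max_ideal V = {x \<in> V. \<not> (x \<noteq> 0 \<and> inverse x \<in> V)}"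

definition prime_ideal_of :: "'k::field set \<Rightarrow> 'k set \<Rightarrow> bool" where
  "prime_ideal_of A P \<longleftrightarrow> P \<subseteq> A \<and> 0 \<in> P \<and>
     (\<forall>x\<in>P. \<forall>y\<in>P. x + y \<in> P) \<and>
     (\<forall>a\<in>A. \<forall>x\<in>P. a * x \<in> P) \<and>
     P \<noteq> A \<and>
     (\<forall>a\<in>A. \<forall>b\<in>A. a * b \<in> P \<longrightarrow> a \<in> P \<or> b \<in> P)"

definition Spec :: "'k::field set \<Rightarrow> 'k set set" where
  "Spec A = {P. prime_ideal_of A P}"

definition center :: "'k::field set \<Rightarrow> 'k set \<Rightarrow> 'k set" where
  "center A V = max_ideal V \<inter> A"

definition filter_on :: "'a set \<Rightarrow> 'a set set \<Rightarrow> bool" where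
  "filter_on X F \<longleftrightarrow> F \<noteq> {} \<and> F \<subseteq> Pow X \<and> {} \<notin> F \<and>
     (\<forall>a\<in>F. \<forall>b\<in>F. a \<inter> b \<in> F) \<and>
     (\<forall>a b. a \<in> F \<and> a \<subseteq> b \<and> b \<subseteq> X \<longrightarrow> b \<in> F)"

definition ultrafilter_on :: "'a set \<Rightarrow> 'a set set \<Rightarrow> bool" where
  "ultrafilter_on X U \<longleftrightarrow> filter_on X U \<and> (\<forall>G. filter_on X G \<and> U \<subseteq> G \<longrightarrow> G = U)"

text \<open>Ultrafilter topology on Zar(K|A), via its closed sets.\<close>
definition zar_limit :: "'k::field set set \<Rightarrow> 'k set set set \<Rightarrow> 'k set" where
  "zar_limit Y U = {x. {V \<in> Y. x \<in> V} \<in> U}"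

definition zar_uf_closed :: "'k::field set \<Rightarrow> 'k set set \<Rightarrow> bool" where
  "zar_uf_closed A Y \<longleftrightarrow> Y \<subseteq> Zar A \<and>
     (\<forall>U. ultrafilter_on Y U \<longrightarrow> zar_limit Y U \<in> Y)"

definition spec_limit :: "'k::field set \<Rightarrow> 'k set set \<Rightarrow> 'k set set set \<Rightarrow> 'k set" where
  "spec_limit A C U = {a \<in> A. {P \<in> C. a \<in> P} \<in> U}"

definition spec_uf_closed :: "'k::field set \<Rightarrow> 'k set set \<Rightarrow> bool" where
  "spec_uf_closed A C \<longleftrightarrow> C \<subseteq> Spec A \<and>
     (\<forall>U. ultrafilter_on C U \<longrightarrow> spec_limit A C U \<in> C)"

end

theory Submission imports Defs begin
lemma filter_X: "filter_on X F \<Longrightarrow> X \<in> F"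
  unfolding filter_on_def by blast
lemma filter_sup: "filter_on X F \<Longrightarrow> a \<in> F \<Longrightarrow> a \<subseteq> b \<Longrightarrow> b \<subseteq> X \<Longrightarrow> b \<in> F"
  unfolding filter_on_def by blast
lemma filter_int: "filter_on X F \<Longrightarrow> a \<in> F \<Longrightarrow> b \<in> F \<Longrightarrow> a \<inter> b \<in> F"
  unfolding filter_on_def by blast
lemma filter_sub: "filter_on X F \<Longrightarrow> a \<in> F \<Longrightarrow> a \<subseteq> X"
  unfolding filter_on_def by blast
lemma filter_empty: "filter_on X F \<Longrightarrow> {} \<notin> F"
  unfolding filter_on_def by blast
lemma filterI:
  assumes "F \<noteq> {}" "F \<subseteq> Pow X" "{} \<notin> F" "\<And>a b. a \<in> F \<Longrightarrow> b \<in> F \<Longrightarrow> a \<inter> b \<in> F"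
    "\<And>a b. a \<in> F \<Longrightarrow> a \<subseteq> b \<Longrightarrow> b \<subseteq> X \<Longrightarrow> b \<in> F"
  shows "filter_on X F"
  unfolding filter_on_def using assms by blast
lemma uf_filter: "ultrafilter_on X U \<Longrightarrow> filter_on X U"
  unfolding ultrafilter_on_def by blast
lemma uf_max: "ultrafilter_on X U \<Longrightarrow> filter_on X G \<Longrightarrow> U \<subseteq> G \<Longrightarrow> G = U"
  unfolding ultrafilter_on_def by blast

lemma uf_compl:
  assumes U: "ultrafilter_on X U" and S: "S \<subseteq> X"
  shows "S \<in> U \<or> X - S \<in> U"
proof (rule ccontr)
  assume n: "\<not> (S \<in> U \<or> X - S \<in> U)"
  have F: "filter_on X U" using uf_filter[OF U] .
  show False
  proof (cases "\<exists>u\<in>U. u \<inter> (X - S) = {}")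
    case True
    then obtain u where u: "u \<in> U" "u \<inter> (X - S) = {}" by blast
    have "u \<subseteq> X" using filter_sub[OF F u(1)] .
    hence "u \<subseteq> S" using u by blast
    hence "S \<in> U" using filter_sup[OF F u(1) _ S] by blast
    thus False using n by blast
  next
    case False
    define G where "G = {T. T \<subseteq> X \<and> (\<exists>u\<in>U. u \<inter> (X - S) \<subseteq> T)}"
    have XU: "X \<in> U" using filter_X[OF F] .
    have fG: "filter_on X G"
    proof (rule filterI)
      show "G \<noteq> {}" using XU unfolding G_def by blast
      show "G \<subseteq> Pow X" unfolding G_def by blast
      show "{} \<notin> G" using False unfolding G_def by blast
    next
      fix a b assume "a \<in> G" "b \<in> G"
      then obtain u v where uv: "u \<in> U" "v \<in> U" "u \<inter> (X - S) \<subseteq> a" "v \<inter> (X - S) \<subseteq> b"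
        "a \<subseteq> X" "b \<subseteq> X" unfolding G_def by blast
      have "u \<inter> v \<in> U" using filter_int[OF F uv(1,2)] .
      moreover have "(u \<inter> v) \<inter> (X - S) \<subseteq> a \<inter> b" using uv by blast
      ultimately show "a \<inter> b \<in> G" using uv unfolding G_def by blast
    next
      fix a b assume "a \<in> G" "a \<subseteq> b" "b \<subseteq> X"
      thus "b \<in> G" unfolding G_def by blast
    qed
    have "U \<subseteq> G"
    proof
      fix u assume "u \<in> U"
      moreover have "u \<subseteq> X" using filter_sub[OF F \<open>u \<in> U\<close>] .
      ultimately show "u \<in> G" unfolding G_def by blast
    qed
    hence "G = U" using uf_max[OF U fG] by blast
    moreover have "X - S \<in> G" using XU unfolding G_def by blast
    ultimately show False using n by blast
  qed
qed

lemma uf_intro: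
  assumes F: "filter_on X U" and c: "\<And>S. S \<subseteq> X \<Longrightarrow> S \<in> U \<or> X - S \<in> U"
  shows "ultrafilter_on X U"
  unfolding ultrafilter_on_def
proof (intro conjI allI impI F)
  fix G assume G: "filter_on X G \<and> U \<subseteq> G"
  hence fG: "filter_on X G" and UG: "U \<subseteq> G" by auto
  show "G = U"
  proof
    show "U \<subseteq> G" using UG .
    show "G \<subseteq> U"
    proof
      fix T assume T: "T \<in> G"
      have TX: "T \<subseteq> X" using filter_sub[OF fG T] .
      show "T \<in> U"
      proof (rule ccontr)
        assume "T \<notin> U"
        hence "X - T \<in> G" using c[OF TX] UG by blast
        hence "T \<inter> (X - T) \<in> G" using filter_int[OF fG T] by blast
        moreover have "T \<inter> (X - T) = {}" by blast
        ultimately show False using filter_empty[OF fG] by simp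
      qed
    qed
  qed
qed

lemma uf_exists:
  assumes F: "filter_on X F"
  shows "\<exists>U. ultrafilter_on X U \<and> F \<subseteq> U"
proof -
  define \<A> where "\<A> = {G. filter_on X G \<and> F \<subseteq> G}"
  have "\<exists>M\<in>\<A>. \<forall>G\<in>\<A>. M \<subseteq> G \<longrightarrow> G = M"
  proof (rule subset_Zorn_nonempty)
    show "\<A> \<noteq> {}" using F unfolding \<A>_def by blast
  next
    fix \<C> assume ne: "\<C> \<noteq> {}" and ch: "subset.chain \<A> \<C>"
    have sub: "\<C> \<subseteq> \<A>" and tot: "\<forall>a\<in>\<C>. \<forall>b\<in>\<C>. a \<subseteq> b \<or> b \<subseteq> a"
      using ch by (auto simp: subset_chain_def)
    have fC: "\<And>G. G \<in> \<C> \<Longrightarrow> filter_on X G" and FC: "\<And>G. G \<in> \<C> \<Longrightarrow> F \<subseteq> G"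
      using sub unfolding \<A>_def by auto
    obtain G0 where G0: "G0 \<in> \<C>" using ne by blast
    have "filter_on X (\<Union>\<C>)"
    proof (rule filterI)
      show "\<Union>\<C> \<noteq> {}" using filter_X[OF fC[OF G0]] G0 by blast
      show "\<Union>\<C> \<subseteq> Pow X" using filter_sub[OF fC] by blast
      show "{} \<notin> \<Union>\<C>" using filter_empty[OF fC] by blast
    next
      fix a b assume "a \<in> \<Union>\<C>" "b \<in> \<Union>\<C>"
      then obtain G1 G2 where g: "G1 \<in> \<C>" "G2 \<in> \<C>" "a \<in> G1" "b \<in> G2" by blast
      show "a \<inter> b \<in> \<Union>\<C>"
      proof (cases "G1 \<subseteq> G2")
        case True
        hence "a \<inter> b \<in> G2" using filter_int[OF fC[OF g(2)]] g by blast
        thus ?thesis using g by blast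
      next
        case False
        hence "G2 \<subseteq> G1" using tot g by blast
        hence "a \<inter> b \<in> G1" using filter_int[OF fC[OF g(1)]] g by blast
        thus ?thesis using g by blast
      qed
    next
      fix a b assume "a \<in> \<Union>\<C>" "a \<subseteq> b" "b \<subseteq> X"
      then obtain G where "G \<in> \<C>" "a \<in> G" by blast
      hence "b \<in> G" using filter_sup[OF fC] \<open>a \<subseteq> b\<close> \<open>b \<subseteq> X\<close> by blast
      thus "b \<in> \<Union>\<C>" using \<open>G \<in> \<C>\<close> by blast
    qed
    moreover have "F \<subseteq> \<Union>\<C>" using FC G0 by blast
    ultimately show "\<Union>\<C> \<in> \<A>" unfolding \<A>_def by blast
  qed
  then obtain M where M: "M \<in> \<A>" "\<forall>G\<in>\<A>. M \<subseteq> G \<longrightarrow> G = M" by blast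
  have "ultrafilter_on X M"
    unfolding ultrafilter_on_def
  proof (intro conjI allI impI)
    show "filter_on X M" using M unfolding \<A>_def by blast
    fix G assume "filter_on X G \<and> M \<subseteq> G"
    thus "G = M" using M unfolding \<A>_def by blast
  qed
  thus ?thesis using M unfolding \<A>_def by blast
qed

lemma nonunit_add:
  assumes V: "valuation_ring V" and x: "x \<in> max_ideal V" and y: "y \<in> max_ideal V"
  shows "x + y \<in> max_ideal V"
proof -
  have R: "is_subring V" using V unfolding valuation_ring_def by blast
  have xV: "x \<in> V" and yV: "y \<in> V" using x y unfolding max_ideal_def by auto
  have sV: "x + y \<in> V" using R xV yV unfolding is_subring_def by blast
  have one: "1 \<in> V" using R unfolding is_subring_def by blast
  show ?thesis
  proof (cases "x = 0 \<or> y = 0")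
    case True thus ?thesis using x y by auto
  next
    case False
    hence x0: "x \<noteq> 0" and y0: "y \<noteq> 0" by auto
    have xi: "inverse x \<notin> V" and yi: "inverse y \<notin> V" using x y x0 y0 unfolding max_ideal_def by auto
    show ?thesis
    proof (rule ccontr)
      assume "x + y \<notin> max_ideal V"
      hence s0: "x + y \<noteq> 0" and si: "inverse (x + y) \<in> V" using sV unfolding max_ideal_def by auto
      have "x / y \<noteq> 0" using x0 y0 by simp
      hence "x / y \<in> V \<or> inverse (x / y) \<in> V" using V unfolding valuation_ring_def by blast
      thus False
      proof
        assume q: "x / y \<in> V"
        have "1 + x / y \<in> V" using R one q unfolding is_subring_def by blast
        hence "(1 + x / y) * inverse (x + y) \<in> V" using R si unfolding is_subring_def by blast
        moreover have "(1 + x / y) * inverse (x + y) = inverse y"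
          using y0 s0 by (simp add: field_simps)
        ultimately show False using yi by simp
      next
        assume q: "inverse (x / y) \<in> V"
        have "1 + inverse (x / y) \<in> V" using R one q unfolding is_subring_def by blast
        hence "(1 + inverse (x / y)) * inverse (x + y) \<in> V" using R si unfolding is_subring_def by blast
        moreover have "(1 + inverse (x / y)) * inverse (x + y) = inverse x"
          using x0 y0 s0 by (simp add: field_simps)
        ultimately show False using xi by simp
      qed
    qed
  qed
qed

lemma center_prime:
  assumes A: "is_subring A" and V: "V \<in> Zar A"
  shows "prime_ideal_of A (center A V)"
proof -
  have VR: "valuation_ring V" and AV: "A \<subseteq> V" using V unfolding Zar_def by auto
  have R: "is_subring V" using VR unfolding valuation_ring_def by blast
  have zA: "0 \<in> A" and oA: "1 \<in> A" using A unfolding is_subring_def by auto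
  have z: "0 \<in> center A V" using zA AV unfolding center_def max_ideal_def by auto
  have add: "\<forall>x\<in>center A V. \<forall>y\<in>center A V. x + y \<in> center A V"
    using nonunit_add[OF VR] A unfolding center_def is_subring_def by blast
  have mul: "\<forall>a\<in>A. \<forall>x\<in>center A V. a * x \<in> center A V"
  proof (intro ballI)
    fix a x assume a: "a \<in> A" and x: "x \<in> center A V"
    have aV: "a \<in> V" using a AV by blast
    have xV: "x \<in> V" and xA: "x \<in> A" and xn: "\<not> (x \<noteq> 0 \<and> inverse x \<in> V)"
      using x unfolding center_def max_ideal_def by auto
    have "a * x \<in> V" using R aV xV unfolding is_subring_def by blast
    moreover have "a * x \<in> A" using A a xA unfolding is_subring_def by blast
    moreover have "\<not> (a * x \<noteq> 0 \<and> inverse (a * x) \<in> V)"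
    proof
      assume h: "a * x \<noteq> 0 \<and> inverse (a * x) \<in> V"
      hence "a * inverse (a * x) \<in> V" using R aV unfolding is_subring_def by blast
      moreover have "a * inverse (a * x) = inverse x" using h by (simp add: field_simps)
      ultimately have "inverse x \<in> V" by metis
      thus False using xn h by auto
    qed
    ultimately show "a * x \<in> center A V" unfolding center_def max_ideal_def by blast
  qed
  have ne: "center A V \<noteq> A"
  proof
    assume "center A V = A"
    hence "1 \<in> max_ideal V" using oA unfolding center_def by blast
    thus False unfolding max_ideal_def using oA AV by auto
  qed
  have pr: "\<forall>a\<in>A. \<forall>b\<in>A. a * b \<in> center A V \<longrightarrow> a \<in> center A V \<or> b \<in> center A V"
  proof (intro ballI impI)
    fix a b assume a: "a \<in> A" and b: "b \<in> A" and ab: "a * b \<in> center A V"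
    show "a \<in> center A V \<or> b \<in> center A V"
    proof (rule ccontr)
      assume "\<not> (a \<in> center A V \<or> b \<in> center A V)"
      hence ai: "a \<noteq> 0" "inverse a \<in> V" and bi: "b \<noteq> 0" "inverse b \<in> V"
        using a b AV unfolding center_def max_ideal_def by auto
      have "inverse a * inverse b \<in> V" using R ai bi unfolding is_subring_def by blast
      hence "inverse (a * b) \<in> V" by (simp add: field_simps)
      thus False using ab ai bi unfolding center_def max_ideal_def by auto
    qed
  qed
  show ?thesis unfolding prime_ideal_of_def
    using z add mul ne pr unfolding center_def by blast
qed

lemma key:
  assumes A: "is_subring A" and Y: "Y \<subseteq> Zar A" and U: "ultrafilter_on Y U"
  shows "zar_limit Y U \<in> Zar A"
    and "\<And>a. a \<in> A \<Longrightarrow> (a \<in> center A (zar_limit Y U) \<longleftrightarrow> {V \<in> Y. a \<in> center A V} \<in> U)"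
proof -
  define W where "W = zar_limit Y U"
  have F: "filter_on Y U" using uf_filter[OF U] .
  have YU: "Y \<in> U" using filter_X[OF F] .
  have sup: "\<And>a b. a \<in> U \<Longrightarrow> a \<subseteq> b \<Longrightarrow> b \<subseteq> Y \<Longrightarrow> b \<in> U" using filter_sup[OF F] by blast
  have int: "\<And>a b. a \<in> U \<Longrightarrow> b \<in> U \<Longrightarrow> a \<inter> b \<in> U" using filter_int[OF F] by blast
  have emp: "{} \<notin> U" using filter_empty[OF F] .
  have VYs: "\<And>V. V \<in> Y \<Longrightarrow> is_subring V" using Y unfolding Zar_def valuation_ring_def by blast
  have VYv: "\<And>V x. V \<in> Y \<Longrightarrow> x \<noteq> 0 \<Longrightarrow> x \<in> V \<or> inverse x \<in> V"
    using Y unfolding Zar_def valuation_ring_def by blast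
  have VYA: "\<And>V. V \<in> Y \<Longrightarrow> A \<subseteq> V" using Y unfolding Zar_def by blast
  have Wm: "\<And>x. x \<in> W \<longleftrightarrow> {V \<in> Y. x \<in> V} \<in> U" unfolding W_def zar_limit_def by simp
  have AW: "A \<subseteq> W"
  proof
    fix a assume "a \<in> A"
    hence "{V \<in> Y. a \<in> V} = Y" using VYA by blast
    thus "a \<in> W" using Wm YU by simp
  qed
  have closed2: "\<And>x y z. x \<in> W \<Longrightarrow> y \<in> W \<Longrightarrow> (\<And>V. V \<in> Y \<Longrightarrow> x \<in> V \<Longrightarrow> y \<in> V \<Longrightarrow> z \<in> V) \<Longrightarrow> z \<in> W"
  proof -
    fix x y z assume x: "x \<in> W" and y: "y \<in> W" and h: "\<And>V. V \<in> Y \<Longrightarrow> x \<in> V \<Longrightarrow> y \<in> V \<Longrightarrow> z \<in> V"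
    have "{V \<in> Y. x \<in> V} \<inter> {V \<in> Y. y \<in> V} \<in> U" using int x y Wm by blast
    moreover have "{V \<in> Y. x \<in> V} \<inter> {V \<in> Y. y \<in> V} \<subseteq> {V \<in> Y. z \<in> V}" using h by blast
    moreover have "{V \<in> Y. z \<in> V} \<subseteq> Y" by blast
    ultimately have "{V \<in> Y. z \<in> V} \<in> U" by (rule sup)
    thus "z \<in> W" using Wm by simp
  qed
  have sr: "is_subring W" unfolding is_subring_def
  proof (intro conjI ballI)
    show "0 \<in> W" "1 \<in> W" using AW A unfolding is_subring_def by auto
  next
    fix x y assume x: "x \<in> W" and y: "y \<in> W"
    show "x + y \<in> W" by (rule closed2[OF x y]) (simp add: VYs[unfolded is_subring_def])
    show "- x \<in> W" by (rule closed2[OF x x]) (simp add: VYs[unfolded is_subring_def])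
    show "x * y \<in> W" by (rule closed2[OF x y]) (simp add: VYs[unfolded is_subring_def])
  qed
  have val: "\<forall>x. x \<noteq> 0 \<longrightarrow> x \<in> W \<or> inverse x \<in> W"
  proof (intro allI impI)
    fix x :: 'a assume x0: "x \<noteq> 0"
    show "x \<in> W \<or> inverse x \<in> W"
    proof (rule ccontr)
      assume n: "\<not> (x \<in> W \<or> inverse x \<in> W)"
      have h1: "{V \<in> Y. x \<in> V} \<notin> U" using n Wm by simp
      have h2: "Y - {V \<in> Y. x \<in> V} \<in> U" using uf_compl[OF U, of "{V \<in> Y. x \<in> V}"] h1 by auto
      have h3: "Y - {V \<in> Y. x \<in> V} \<subseteq> {V \<in> Y. inverse x \<in> V}"
      proof
        fix V assume "V \<in> Y - {V \<in> Y. x \<in> V}"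
        thus "V \<in> {V \<in> Y. inverse x \<in> V}" using VYv[of V x] x0 by auto
      qed
      have "{V \<in> Y. inverse x \<in> V} \<in> U" using sup[OF h2 h3] by blast
      thus False using n Wm by simp
    qed
  qed
  show "zar_limit Y U \<in> Zar A"
  proof -
    have "W \<in> Zar A" using sr val AW unfolding Zar_def valuation_ring_def by blast
    thus ?thesis unfolding W_def .
  qed
  fix a assume a: "a \<in> A"
  have aW: "a \<in> W" using a AW by blast
  have cW: "a \<in> center A W \<longleftrightarrow> \<not> (a \<noteq> 0 \<and> inverse a \<in> W)"
    using a aW unfolding center_def max_ideal_def by simp
  have cV: "\<And>V. V \<in> Y \<Longrightarrow> (a \<in> center A V \<longleftrightarrow> \<not> (a \<noteq> 0 \<and> inverse a \<in> V))"
  proof -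
    fix V assume "V \<in> Y"
    hence "a \<in> V" using VYA a by blast
    thus "a \<in> center A V \<longleftrightarrow> \<not> (a \<noteq> 0 \<and> inverse a \<in> V)"
      using a unfolding center_def max_ideal_def by simp
  qed
  have "a \<in> center A W \<longleftrightarrow> {V \<in> Y. a \<in> center A V} \<in> U"
  proof (cases "a = 0")
    case True
    have "{V \<in> Y. a \<in> center A V} = Y" using cV True by blast
    thus ?thesis using cW True YU by simp
  next
    case False
    have eq: "{V \<in> Y. a \<in> center A V} = Y - {V \<in> Y. inverse a \<in> V}"
      using cV False by blast
    have "{V \<in> Y. a \<in> center A V} \<in> U \<longleftrightarrow> inverse a \<notin> W"
    proof
      assume h: "{V \<in> Y. a \<in> center A V} \<in> U"
      show "inverse a \<notin> W"
      proof
        assume "inverse a \<in> W"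
        hence "{V \<in> Y. inverse a \<in> V} \<in> U" using Wm by simp
        moreover have "Y - {V \<in> Y. inverse a \<in> V} \<in> U" using h eq by simp
        ultimately have "{V \<in> Y. inverse a \<in> V} \<inter> (Y - {V \<in> Y. inverse a \<in> V}) \<in> U"
          by (rule int)
        moreover have "{V \<in> Y. inverse a \<in> V} \<inter> (Y - {V \<in> Y. inverse a \<in> V}) = {}" by blast
        ultimately show False using emp by simp
      qed
    next
      assume "inverse a \<notin> W"
      hence "{V \<in> Y. inverse a \<in> V} \<notin> U" using Wm by simp
      hence "Y - {V \<in> Y. inverse a \<in> V} \<in> U" using uf_compl[OF U, of "{V \<in> Y. inverse a \<in> V}"] by blast
      thus "{V \<in> Y. a \<in> center A V} \<in> U" using eq by simp
    qed
    thus ?thesis using cW False by simp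
  qed
  thus "a \<in> center A (zar_limit Y U) \<longleftrightarrow> {V \<in> Y. a \<in> center A V} \<in> U" unfolding W_def .
qed

theorem theorem3p9:
  fixes A :: "'k::field set"
  assumes "is_subring A"
  shows "(\<forall>C. spec_uf_closed A C \<longrightarrow> zar_uf_closed A {V \<in> Zar A. center A V \<in> C})
       \<and> (\<forall>Y. zar_uf_closed A Y \<longrightarrow> spec_uf_closed A (center A ` Y))"
proof (intro conjI allI impI)
  note A = assms
  fix C assume Cc: "spec_uf_closed A C"
  define Y where "Y = {V \<in> Zar A. center A V \<in> C}"
  have Ym: "\<And>V. V \<in> Y \<longleftrightarrow> V \<in> Zar A \<and> center A V \<in> C" unfolding Y_def by simp
  have CS: "\<And>U. ultrafilter_on C U \<Longrightarrow> spec_limit A C U \<in> C" using Cc unfolding spec_uf_closed_def by blast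
  have YZ: "Y \<subseteq> Zar A" using Ym by blast
  have "\<forall>U. ultrafilter_on Y U \<longrightarrow> zar_limit Y U \<in> Y"
  proof (intro allI impI)
    fix U assume U: "ultrafilter_on Y U"
    have F: "filter_on Y U" using uf_filter[OF U] .
    have YU: "Y \<in> U" using filter_X[OF F] .
    define U' where "U' = {S. S \<subseteq> C \<and> {V \<in> Y. center A V \<in> S} \<in> U}"
    have U'm: "\<And>S. S \<in> U' \<longleftrightarrow> S \<subseteq> C \<and> {V \<in> Y. center A V \<in> S} \<in> U" unfolding U'_def by simp
    have pre: "\<And>S. {V \<in> Y. center A V \<in> C - S} = Y - {V \<in> Y. center A V \<in> S}"
      using Ym by blast
    have fU': "filter_on C U'"
    proof (rule filterI)
      have "{V \<in> Y. center A V \<in> C} = Y" using Ym by blast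
      hence "C \<in> U'" using YU U'm by simp
      thus "U' \<noteq> {}" by blast
      show "U' \<subseteq> Pow C" using U'm by blast
      show "{} \<notin> U'" using filter_empty[OF F] U'm by simp
    next
      fix a b assume ab: "a \<in> U'" "b \<in> U'"
      hence "{V \<in> Y. center A V \<in> a} \<in> U" "{V \<in> Y. center A V \<in> b} \<in> U" "a \<subseteq> C"
        using U'm by blast+
      hence "{V \<in> Y. center A V \<in> a} \<inter> {V \<in> Y. center A V \<in> b} \<in> U" using filter_int[OF F] by blast
      moreover have "{V \<in> Y. center A V \<in> a} \<inter> {V \<in> Y. center A V \<in> b} = {V \<in> Y. center A V \<in> a \<inter> b}" by blast
      ultimately show "a \<inter> b \<in> U'" using U'm \<open>a \<subseteq> C\<close> by auto
    next
      fix a b assume h: "a \<in> U'" "a \<subseteq> b" "b \<subseteq> C"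
      hence "{V \<in> Y. center A V \<in> a} \<in> U" using U'm by blast
      moreover have "{V \<in> Y. center A V \<in> a} \<subseteq> {V \<in> Y. center A V \<in> b}" using h by blast
      moreover have "{V \<in> Y. center A V \<in> b} \<subseteq> Y" by blast
      ultimately have "{V \<in> Y. center A V \<in> b} \<in> U" by (rule filter_sup[OF F])
      thus "b \<in> U'" using h U'm by blast
    qed
    have uU': "ultrafilter_on C U'"
    proof (rule uf_intro[OF fU'])
      fix S assume S: "S \<subseteq> C"
      have "{V \<in> Y. center A V \<in> S} \<in> U \<or> Y - {V \<in> Y. center A V \<in> S} \<in> U"
        using uf_compl[OF U, of "{V \<in> Y. center A V \<in> S}"] by blast
      hence "{V \<in> Y. center A V \<in> S} \<in> U \<or> {V \<in> Y. center A V \<in> C - S} \<in> U"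
        unfolding pre .
      moreover have "C - S \<subseteq> C" by blast
      ultimately show "S \<in> U' \<or> C - S \<in> U'" using S U'm by blast
    qed
    have inC: "spec_limit A C U' \<in> C" using CS[OF uU'] .
    have eqs: "spec_limit A C U' = center A (zar_limit Y U)"
    proof (rule set_eqI)
      fix a
      have e1: "{V \<in> Y. center A V \<in> {P \<in> C. a \<in> P}} = {V \<in> Y. a \<in> center A V}" using Ym by blast
      have e2: "{P \<in> C. a \<in> P} \<subseteq> C" by blast
      have "a \<in> spec_limit A C U' \<longleftrightarrow> a \<in> A \<and> {P \<in> C. a \<in> P} \<in> U'"
        unfolding spec_limit_def by simp
      also have "\<dots> \<longleftrightarrow> a \<in> A \<and> {V \<in> Y. a \<in> center A V} \<in> U"
        using U'm[of "{P \<in> C. a \<in> P}"] e1 e2 by simp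
      also have "\<dots> \<longleftrightarrow> a \<in> center A (zar_limit Y U)"
      proof
        assume "a \<in> A \<and> {V \<in> Y. a \<in> center A V} \<in> U"
        thus "a \<in> center A (zar_limit Y U)" using key(2)[OF A YZ U, of a] by blast
      next
        assume h: "a \<in> center A (zar_limit Y U)"
        hence "a \<in> A" unfolding center_def by blast
        thus "a \<in> A \<and> {V \<in> Y. a \<in> center A V} \<in> U" using key(2)[OF A YZ U, of a] h by blast
      qed
      finally show "a \<in> spec_limit A C U' \<longleftrightarrow> a \<in> center A (zar_limit Y U)" .
    qed
    have "center A (zar_limit Y U) \<in> C" using inC eqs by simp
    thus "zar_limit Y U \<in> Y" using key(1)[OF A YZ U] Ym by blast
  qed
  hence "zar_uf_closed A Y" using YZ unfolding zar_uf_closed_def by blast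
  thus "zar_uf_closed A {V \<in> Zar A. center A V \<in> C}" unfolding Y_def .
next
  note A = assms
  fix Y assume Yc: "zar_uf_closed A Y"
  have YZ: "Y \<subseteq> Zar A" and YL: "\<forall>U. ultrafilter_on Y U \<longrightarrow> zar_limit Y U \<in> Y"
    using Yc unfolding zar_uf_closed_def by blast+
  define C where "C = center A ` Y"
  have CS: "C \<subseteq> Spec A" using center_prime[OF A] YZ unfolding C_def Spec_def by blast
  have "\<forall>U. ultrafilter_on C U \<longrightarrow> spec_limit A C U \<in> C"
  proof (intro allI impI)
    fix U assume U: "ultrafilter_on C U"
    have F: "filter_on C U" using uf_filter[OF U] .
    define pre where "pre S = {V \<in> Y. center A V \<in> S}" for S
    define F' where "F' = {T. T \<subseteq> Y \<and> (\<exists>S\<in>U. pre S \<subseteq> T)}"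
    have F'm: "\<And>T. T \<in> F' \<longleftrightarrow> T \<subseteq> Y \<and> (\<exists>S\<in>U. pre S \<subseteq> T)" unfolding F'_def by simp
    have pre_sub: "\<And>S. pre S \<subseteq> Y" unfolding pre_def by blast
    have fF': "filter_on Y F'"
    proof (rule filterI)
      have "C \<in> U" using filter_X[OF F] .
      moreover have "pre C \<subseteq> Y" unfolding pre_def by blast
      ultimately show "F' \<noteq> {}" unfolding F'_def by blast
      show "F' \<subseteq> Pow Y" unfolding F'_def by blast
      show "{} \<notin> F'"
      proof
        assume "{} \<in> F'"
        then obtain S where S: "S \<in> U" "pre S = {}" unfolding F'_def by blast
        have "S \<subseteq> C" using filter_sub[OF F S(1)] .
        moreover have "S \<noteq> {}" using S(1) filter_empty[OF F] by blast
        ultimately obtain P where "P \<in> S" "P \<in> C" by blast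
        thus False using S unfolding pre_def C_def by blast
      qed
    next
      fix a b assume "a \<in> F'" "b \<in> F'"
      then obtain S1 S2 where "S1 \<in> U" "S2 \<in> U" "pre S1 \<subseteq> a" "pre S2 \<subseteq> b" "a \<subseteq> Y" "b \<subseteq> Y"
        unfolding F'_def by blast
      moreover have "S1 \<inter> S2 \<in> U" using filter_int[OF F \<open>S1 \<in> U\<close> \<open>S2 \<in> U\<close>] .
      moreover have "pre (S1 \<inter> S2) = pre S1 \<inter> pre S2" unfolding pre_def by blast
      ultimately show "a \<inter> b \<in> F'" unfolding F'_def by blast
    next
      fix a b assume "a \<in> F'" "a \<subseteq> b" "b \<subseteq> Y"
      thus "b \<in> F'" unfolding F'_def by blast
    qed
    obtain U' where U': "ultrafilter_on Y U'" "F' \<subseteq> U'" using uf_exists[OF fF'] by blast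
    have fU': "filter_on Y U'" using uf_filter[OF U'(1)] .
    have bk: "\<And>S. S \<subseteq> C \<Longrightarrow> pre S \<in> U' \<Longrightarrow> S \<in> U"
    proof (rule ccontr)
      fix S assume S: "S \<subseteq> C" "pre S \<in> U'" "S \<notin> U"
      hence "C - S \<in> U" using uf_compl[OF U S(1)] by blast
      hence "pre (C - S) \<in> F'" using F'm pre_sub by blast
      hence "pre (C - S) \<in> U'" using U'(2) by blast
      hence "pre S \<inter> pre (C - S) \<in> U'" using filter_int[OF fU' S(2)] by blast
      moreover have "pre S \<inter> pre (C - S) = {}" unfolding pre_def by blast
      ultimately show False using filter_empty[OF fU'] by simp
    qed
    have forth: "\<And>S. S \<in> U \<Longrightarrow> pre S \<in> U'"
    proof -
      fix S assume "S \<in> U"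
      hence "pre S \<in> F'" using F'm pre_sub by blast
      thus "pre S \<in> U'" using U'(2) by blast
    qed
    have WY: "zar_limit Y U' \<in> Y" using YL U'(1) by blast
    have "spec_limit A C U = center A (zar_limit Y U')"
    proof (rule set_eqI)
      fix a
      have pe: "pre {P \<in> C. a \<in> P} = {V \<in> Y. a \<in> center A V}" unfolding pre_def C_def by blast
      have "{P \<in> C. a \<in> P} \<in> U \<longleftrightarrow> pre {P \<in> C. a \<in> P} \<in> U'"
        using bk[of "{P \<in> C. a \<in> P}"] forth[of "{P \<in> C. a \<in> P}"] by blast
      hence "a \<in> spec_limit A C U \<longleftrightarrow> a \<in> A \<and> {V \<in> Y. a \<in> center A V} \<in> U'"
        unfolding spec_limit_def pe by auto
      also have "\<dots> \<longleftrightarrow> a \<in> center A (zar_limit Y U')"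
        using key(2)[OF A YZ U'(1), of a] unfolding center_def by blast
      finally show "a \<in> spec_limit A C U \<longleftrightarrow> a \<in> center A (zar_limit Y U')" .
    qed
    thus "spec_limit A C U \<in> C" using WY unfolding C_def by simp
  qed
  thus "spec_uf_closed A (center A ` Y)" using CS unfolding spec_uf_closed_def C_def by blast
qed

end
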